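(* Let $X$ be a finite set, let $\emptyset \neq A \subseteq B \subseteq 2^X$, let $X_p$ be a random subset of $X$ with distribution $\mu_p$, let $p\in(0,1)$, and let $K=48$. Then for any $\epsilon \in (0,1)$ satisfying $$\epsilon > 1 - r_{A,B}(p)\left(1-\ell_0(\langle A\rangle)\,2^{-p/(K q(\langle A \rangle))}\right),$$ we have $$\mathbb{P}\big(X_p \in A \mid X_p \in B\big) > 1-\epsilon.$$
   Context: For $p\in[0,1]$, $\mu_p$ is the product measure on $2^X$: $\mu_p(S)=p^{|S|}(1-p)^{|X|-|S|}$ for $S\subseteq X$, extended to families by $\mu_p(\mathcal{F})=\sum_{S\in\mathcal{F}}\mu_p(S)$. For $\mathcal{A}\subseteq 2^X$, $\langle \mathcal{A}\rangle=\{T\subseteq X: S\subseteq T\text{ for some }S\in\mathcal{A}\}$ (the upper set generated by $\mathcal{A}$). A family $\mathcal{G}$ covers an upper set $\mathcal{F}$ if $\mathcal{F}\subseteq\bigcup_{S\in\mathcal{G}}\langle\{S\}\rangle$; $\mathcal{F}$ is $p$-small if some cover $\mathcal{G}$ has $\sum_{S\in\mathcal{G}}p^{|S|}\le\frac12$; $q(\mathcal{F})$ is the largest $p$ for which $\mathcal{F}$ is $p$-small. With $\mathcal{F}_0$ the set of inclusion-minimal elements of $\mathcal{F}$, $\ell_0(\mathcal{F})=\max\{|S|:S\in\mathcal{F}_0\}$. For $\emptyset\ne A\subseteq B\subseteq 2^X$, $r_{A,B}(p)=\dfrac{\mathbb{P}(X_p\in A\mid X_p\in\langle A\rangle)}{\mathbb{P}(X_p\in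 B)}$. *)

theory Defs
  imports Complex_Main
begin

definition mu :: "'a set \<Rightarrow> real \<Rightarrow> 'a set \<Rightarrow> real" where
  "mu X p S = p ^ card S * (1 - p) ^ (card X - card S)"

definition mu_fam :: "'a set \<Rightarrow> real \<Rightarrow> 'a set set \<Rightarrow> real" where
  "mu_fam X p F = (\<Sum>S\<in>F. mu X p S)"

definition upset :: "'a set \<Rightarrow> 'a set set \<Rightarrow> 'a set set" where
  "upset X A = {T. T \<subseteq> X \<and> (\<exists>S\<in>A. S \<subseteq> T)}"

definition covers :: "'a set \<Rightarrow> 'a set set \<Rightarrow> 'a set set \<Rightarrow> bool" where
  "covers X G F \<longleftrightarrow> F \<subseteq> (\<Union>S\<in>G. upset X {S})"

definition p_small :: "'a set \<Rightarrow> real \<Rightarrow> 'a set set \<Rightarrow> bool" where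
  "p_small X p F \<longleftrightarrow> (\<exists>G. G \<subseteq> Pow X \<and> covers X G F \<and> (\<Sum>S\<in>G. p ^ card S) \<le> 1/2)"

definition qq :: "'a set \<Rightarrow> 'a set set \<Rightarrow> real" where
  "qq X F = Sup {p. 0 \<le> p \<and> p \<le> 1 \<and> p_small X p F}"

definition minimal_elems :: "'a set set \<Rightarrow> 'a set set" where
  "minimal_elems F = {S\<in>F. \<forall>T\<in>F. T \<subseteq> S \<longrightarrow> T = S}"

definition ell0 :: "'a set set \<Rightarrow> nat" where
  "ell0 F = Max (card ` minimal_elems F)"

definition r_AB :: "'a set \<Rightarrow> 'a set set \<Rightarrow> 'a set set \<Rightarrow> real \<Rightarrow> real" where
  "r_AB X A B p = (mu_fam X p A / mu_fam X p (upset X A)) / mu_fam X p B"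

end

theory Submission
  imports Defs
begin


definition fail :: "'a set \<Rightarrow> real \<Rightarrow> 'a set set \<Rightarrow> real" where
  "fail X p G = (\<Sum>Y\<in>{Y\<in>Pow X. Y \<notin> upset X G}. mu X p Y)"

definition large :: "'a set \<Rightarrow> real \<Rightarrow> real \<Rightarrow> 'a set set \<Rightarrow> bool" where
  "large X a c G \<longleftrightarrow> (\<forall>C. C \<subseteq> Pow X \<longrightarrow> covers X C (upset X G) \<longrightarrow> c < (\<Sum>S\<in>C. a ^ card S))"

lemma mu_nonneg: "0 \<le> p \<Longrightarrow> p \<le> 1 \<Longrightarrow> 0 \<le> mu X p S"
  by (simp add: mu_def)

lemma mu_insert_out:
  assumes "finite X" "x \<notin> X" "Y \<subseteq> X"
  shows "mu (insert x X) p Y = (1-p) * mu X p Y"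
proof -
  have "card Y \<le> card X" using assms by (simp add: card_mono)
  then have "card (insert x X) - card Y = Suc (card X - card Y)" using assms by simp
  then show ?thesis by (simp add: mu_def)
qed

lemma mu_insert_in:
  assumes "finite X" "x \<notin> X" "Y \<subseteq> X"
  shows "mu (insert x X) p (insert x Y) = p * mu X p Y"
proof -
  have fY: "finite Y" using assms finite_subset by blast
  have "x \<notin> Y" using assms by blast
  then have "card (insert x Y) = Suc (card Y)" using fY by simp
  moreover have "card (insert x X) = Suc (card X)" using assms by simp
  ultimately show ?thesis by (simp add: mu_def)
qed

lemma sum_Pow_insert:
  assumes "finite X" "x \<notin> X"
  shows "(\<Sum>Y\<in>Pow (insert x X). mu (insert x X) p Y * f Y)
    = (1-p) * (\<Sum>Y\<in>Pow X. mu X p Y * f Y) + p * (\<Sum>Y\<in>Pow X. mu X p Y * f (insert x Y))"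
proof -
  have inj: "inj_on (insert x) (Pow X)"
    unfolding inj_on_def using assms(2) by (metis Pow_iff insert_ident subset_iff)
  have disj: "Pow X \<inter> insert x ` Pow X = {}" using assms(2) by auto
  have "(\<Sum>Y\<in>Pow (insert x X). mu (insert x X) p Y * f Y)
      = (\<Sum>Y\<in>Pow X. mu (insert x X) p Y * f Y) + (\<Sum>Y\<in>insert x ` Pow X. mu (insert x X) p Y * f Y)"
    unfolding Pow_insert using assms disj by (intro sum.union_disjoint) auto
  also have "(\<Sum>Y\<in>insert x ` Pow X. mu (insert x X) p Y * f Y) = (\<Sum>Y\<in>Pow X. mu (insert x X) p (insert x Y) * f (insert x Y))"
    using inj by (simp add: sum.reindex)
  also have "\<dots> = (\<Sum>Y\<in>Pow X. p * (mu X p Y * f (insert x Y)))"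
    using assms by (intro sum.cong) (auto simp: mu_insert_in)
  also have "(\<Sum>Y\<in>Pow X. mu (insert x X) p Y * f Y) = (\<Sum>Y\<in>Pow X. (1-p) * (mu X p Y * f Y))"
    using assms by (intro sum.cong) (auto simp: mu_insert_out)
  finally show ?thesis by (simp add: sum_distrib_left)
qed

lemma sum_mu_one: "finite X \<Longrightarrow> (\<Sum>Y\<in>Pow X. mu X p Y) = 1"
proof (induction X rule: finite_induct)
  case empty
  then show ?case by (simp add: mu_def)
next
  case (insert x X)
  have "(\<Sum>Y\<in>Pow (insert x X). mu (insert x X) p Y) = (\<Sum>Y\<in>Pow (insert x X). mu (insert x X) p Y * 1)" by simp
  also have "\<dots> = (1-p) * (\<Sum>Y\<in>Pow X. mu X p Y * 1) + p * (\<Sum>Y\<in>Pow X. mu X p Y * 1)"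
    by (rule sum_Pow_insert[OF insert(1,2)])
  finally show ?case using insert(3) by simp
qed

lemma coupling:
  assumes "finite X"
  shows "(\<Sum>W\<in>Pow X. mu X a W * (\<Sum>Y\<in>Pow X. mu X b Y * f (W \<union> Y)))
       = (\<Sum>Z\<in>Pow X. mu X (1 - (1-a)*(1-b)) Z * f Z)"
  using assms
proof (induction X arbitrary: f rule: finite_induct)
  case empty
  then show ?case by (simp add: mu_def)
next
  case (insert x X)
  let ?c = "1 - (1-a)*(1-b)"
  have inner: "(\<Sum>Y\<in>Pow (insert x X). mu (insert x X) b Y * f (W \<union> Y))
     = (1-b) * (\<Sum>Y\<in>Pow X. mu X b Y * f (W \<union> Y)) + b * (\<Sum>Y\<in>Pow X. mu X b Y * f (insert x (W \<union> Y)))" for W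
    using sum_Pow_insert[OF insert(1,2), of b "\<lambda>Y. f (W \<union> Y)"] by simp
  have "(\<Sum>W\<in>Pow (insert x X). mu (insert x X) a W * (\<Sum>Y\<in>Pow (insert x X). mu (insert x X) b Y * f (W \<union> Y)))
     = (1-a) * (\<Sum>W\<in>Pow X. mu X a W * (\<Sum>Y\<in>Pow (insert x X). mu (insert x X) b Y * f (W \<union> Y)))
       + a * (\<Sum>W\<in>Pow X. mu X a W * (\<Sum>Y\<in>Pow (insert x X). mu (insert x X) b Y * f (insert x W \<union> Y)))"
    by (rule sum_Pow_insert[OF insert(1,2)])
  also have "\<dots> = (1-a) * ((1-b) * (\<Sum>W\<in>Pow X. mu X a W * (\<Sum>Y\<in>Pow X. mu X b Y * f (W \<union> Y)))
        + b * (\<Sum>W\<in>Pow X. mu X a W * (\<Sum>Y\<in>Pow X. mu X b Y * f (insert x (W \<union> Y)))))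
      + a * (\<Sum>W\<in>Pow X. mu X a W * (\<Sum>Y\<in>Pow X. mu X b Y * f (insert x (W \<union> Y))))"
  proof -
    have inner2: "(\<Sum>Y\<in>Pow (insert x X). mu (insert x X) b Y * f (insert x W \<union> Y))
       = (\<Sum>Y\<in>Pow X. mu X b Y * f (insert x (W \<union> Y)))" for W
    proof -
      have "(\<Sum>Y\<in>Pow (insert x X). mu (insert x X) b Y * f (insert x W \<union> Y))
         = (1-b) * (\<Sum>Y\<in>Pow X. mu X b Y * f (insert x W \<union> Y)) + b * (\<Sum>Y\<in>Pow X. mu X b Y * f (insert x W \<union> insert x Y))"
        by (rule sum_Pow_insert[OF insert(1,2)])
      then show ?thesis by (simp add: algebra_simps)
    qed
    have lin: "(\<Sum>W\<in>A. m W * (c * g W + d * h W)) = c * (\<Sum>W\<in>A. m W * g W) + d * (\<Sum>W\<in>A. m W * h W)"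
      for A :: "'a set set" and m g h :: "'a set \<Rightarrow> real" and c d :: real
      by (simp add: sum.distrib sum_distrib_left algebra_simps)
    show ?thesis unfolding inner inner2 lin by (simp add: left_diff_distrib)
  qed
  also have "\<dots> = (1-a) * ((1-b) * (\<Sum>Z\<in>Pow X. mu X ?c Z * f Z) + b * (\<Sum>Z\<in>Pow X. mu X ?c Z * f (insert x Z)))
      + a * (\<Sum>Z\<in>Pow X. mu X ?c Z * f (insert x Z))"
    using insert(3)[of f] insert(3)[of "\<lambda>Z. f (insert x Z)"] by simp
  also have "\<dots> = (1-?c) * (\<Sum>Z\<in>Pow X. mu X ?c Z * f Z) + ?c * (\<Sum>Z\<in>Pow X. mu X ?c Z * f (insert x Z))"
    by (simp add: algebra_simps)
  also have "\<dots> = (\<Sum>Z\<in>Pow (insert x X). mu (insert x X) ?c Z * f Z)"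
    by (rule sum_Pow_insert[OF insert(1,2), symmetric])
  finally show ?case .
qed



lemma fail_nonneg: "0 \<le> p \<Longrightarrow> p \<le> 1 \<Longrightarrow> 0 \<le> fail X p G"
  unfolding fail_def by (intro sum_nonneg mu_nonneg) auto

lemma fail_le1: assumes "finite X" "0 \<le> p" "p \<le> 1" shows "fail X p G \<le> 1"
proof -
  have "fail X p G \<le> (\<Sum>Y\<in>Pow X. mu X p Y)"
    unfolding fail_def using assms by (intro sum_mono2) (auto intro: mu_nonneg)
  then show ?thesis using sum_mu_one[OF assms(1)] by simp
qed

lemma miss_prob:
  assumes "finite X" "D \<subseteq> X"
  shows "(\<Sum>Y\<in>{Y\<in>Pow X. Y \<inter> D = {}}. mu X w Y) = (1-w) ^ card D"
proof -
  have eq: "{Y\<in>Pow X. Y \<inter> D = {}} = Pow (X - D)" by auto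
  have fD: "finite D" using assms finite_subset by blast
  have cX: "card X = card D + card (X - D)"
    using assms fD by (metis card_Diff_subset card_mono le_add_diff_inverse)
  have "mu X w Y = (1-w) ^ card D * mu (X - D) w Y" if "Y \<subseteq> X - D" for Y
  proof -
    have "card Y \<le> card (X - D)" using that assms by (simp add: card_mono)
    then have "card X - card Y = card D + (card (X - D) - card Y)" using cX by simp
    then show ?thesis by (simp add: mu_def power_add algebra_simps)
  qed
  then have "(\<Sum>Y\<in>Pow (X - D). mu X w Y) = (\<Sum>Y\<in>Pow (X - D). (1-w) ^ card D * mu (X - D) w Y)"
    by (intro sum.cong) auto
  also have "\<dots> = (1-w) ^ card D" using sum_mu_one[of "X - D" w] assms
    by (simp add: sum_distrib_left[symmetric])
  finally show ?thesis using eq by simp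
qed

lemma covers_self: "G \<subseteq> Pow X \<Longrightarrow> covers X G (upset X G)"
  unfolding covers_def upset_def by auto

lemma upset_mono:
  assumes "\<And>S. S \<in> G \<Longrightarrow> \<exists>T\<in>G'. T \<subseteq> S" shows "upset X G \<subseteq> upset X G'"
proof
  fix Y assume "Y \<in> upset X G"
  then obtain S where S: "S \<in> G" "S \<subseteq> Y" "Y \<subseteq> X" unfolding upset_def by blast
  then obtain T where "T \<in> G'" "T \<subseteq> S" using assms by blast
  then show "Y \<in> upset X G'" using S unfolding upset_def by blast
qed

lemma large_mono:
  assumes "large X a c G" "upset X G \<subseteq> upset X G'" shows "large X a c G'"
  unfolding large_def
proof (intro allI impI)
  fix C assume "C \<subseteq> Pow X" "covers X C (upset X G')"
  then have "covers X C (upset X G)" using assms(2) unfolding covers_def by (meson order_trans)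
  then show "c < (\<Sum>S\<in>C. a ^ card S)" using assms(1) \<open>C \<subseteq> Pow X\<close> unfolding large_def by blast
qed

lemma large_nonempty: "large X a c G \<Longrightarrow> 0 \<le> c \<Longrightarrow> G \<noteq> {}"
proof
  assume "large X a c G" "0 \<le> c" "G = {}"
  then have "c < (\<Sum>S\<in>{}. a ^ card S)" unfolding large_def covers_def upset_def by force
  then show False using \<open>0 \<le> c\<close> by simp
qed

lemma fail_empty_in:
  assumes "{} \<in> G" shows "fail X p G = 0"
proof -
  have "{Y\<in>Pow X. Y \<notin> upset X G} = {}" using assms unfolding upset_def by blast
  then show ?thesis unfolding fail_def by (metis sum.empty)
qed

lemma level0:
  assumes "G \<subseteq> Pow X" "finite X" "\<forall>S\<in>G. card S \<le> 0" "G \<noteq> {}"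
  shows "{} \<in> G"
proof -
  obtain S where "S \<in> G" using assms by auto
  moreover then have "finite S" using assms finite_subset by blast
  ultimately show ?thesis using assms by fastforce
qed

lemma level1:
  assumes fX: "finite X" and GX: "G \<subseteq> Pow X" and card1: "\<forall>S\<in>G. card S \<le> 1"
    and lg: "large X a c G" and a: "0 < a" and c: "0 < c" and w: "0 < w" "w \<le> 1"
    and B: "0 \<le> B" "a * B \<le> w"
  shows "fail X w G \<le> exp (- B * c)"
proof (cases "{} \<in> G")
  case True
  then show ?thesis using fail_empty_in[OF True, of X w] by simp
next
  case False
  have fin: "finite S" if "S \<in> G" for S using that GX fX finite_subset by blast
  have sing: "\<exists>x. S = {x}" if "S \<in> G" for S
  proof -
    have "S \<noteq> {}" using False that by blast
    then have "card S \<noteq> 0" using fin[OF that] by simp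
    then have "card S = 1" using card1 that by fastforce
    then show ?thesis by (simp add: card_1_singleton_iff)
  qed
  define D where "D = \<Union>G"
  have DX: "D \<subseteq> X" using GX D_def by auto
  have Geq: "G = (\<lambda>x. {x}) ` D"
  proof
    show "G \<subseteq> (\<lambda>x. {x}) ` D" unfolding D_def using sing by fastforce
    show "(\<lambda>x. {x}) ` D \<subseteq> G" unfolding D_def using sing by fastforce
  qed
  have cardG: "card G = card D" unfolding Geq by (simp add: card_image)
  have "{Y\<in>Pow X. Y \<notin> upset X G} = {Y\<in>Pow X. Y \<inter> D = {}}"
    unfolding upset_def Geq by auto
  then have f: "fail X w G = (1-w) ^ card D"
    unfolding fail_def using miss_prob[OF fX DX] by simp
  have "c < (\<Sum>S\<in>G. a ^ card S)" using lg covers_self[OF GX] GX unfolding large_def by blast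
  also have "\<dots> = (\<Sum>S\<in>G. a)" using Geq by (intro sum.cong) auto
  also have "\<dots> = card D * a" using cardG by simp
  finally have cD: "c < card D * a" .
  have "(1-w) ^ card D \<le> exp (-w) ^ card D"
    using w by (intro power_mono) (auto, metis exp_ge_add_one_self add_uminus_conv_diff)
  also have "\<dots> = exp (- w * card D)" by (rule exp_of_nat2_mult[symmetric])
  also have "\<dots> \<le> exp (- B * c)"
  proof -
    have "B * c \<le> B * (card D * a)" using cD B by (intro mult_left_mono) auto
    also have "\<dots> = (a * B) * card D" by simp
    also have "\<dots> \<le> w * card D" using B by (intro mult_right_mono) auto
    finally show ?thesis by simp
  qed
  finally show ?thesis using f by simp
qed



definition tight :: "'a set set \<Rightarrow> 'a set \<Rightarrow> 'a set \<Rightarrow> bool" where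
  "tight G W S \<longleftrightarrow> S \<in> G \<and> (\<forall>S'\<in>G. S' \<subseteq> W \<union> S \<longrightarrow> card (S - W) \<le> card (S' - W))"

definition UU :: "'a set set \<Rightarrow> 'a set \<Rightarrow> 'a set set" where
  "UU G W = (\<lambda>S. S - W) ` {S. tight G W S}"

lemma U_sub: "G \<subseteq> Pow X \<Longrightarrow> UU G W \<subseteq> Pow X"
  unfolding UU_def tight_def by auto

lemma U_finite: "finite X \<Longrightarrow> G \<subseteq> Pow X \<Longrightarrow> finite (UU G W)"
  using U_sub by (metis finite_Pow_iff finite_subset)

lemma U_card:
  assumes "finite X" "G \<subseteq> Pow X" "\<forall>S\<in>G. card S \<le> l" "T \<in> UU G W"
  shows "card T \<le> l"
proof -
  obtain S where S: "tight G W S" "T = S - W" using assms(4) unfolding UU_def by blast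
  then have "S \<in> G" unfolding tight_def by blast
  then have "finite S" using assms finite_subset by blast
  then have "card T \<le> card S" using S by (simp add: card_mono)
  then show ?thesis using assms(3) \<open>S \<in> G\<close> by fastforce
qed

lemma U_cover:
  assumes "S \<in> G"
  shows "\<exists>T\<in>UU G W. T \<subseteq> S"
proof -
  let ?P = "\<lambda>S'. S' \<in> G \<and> S' \<subseteq> W \<union> S"
  have "?P S" using assms by blast
  then obtain S0 where S0: "?P S0" "\<forall>y. ?P y \<longrightarrow> card (S0 - W) \<le> card (y - W)"
    using ex_has_least_nat[of ?P S "\<lambda>S'. card (S' - W)"] by blast
  have "tight G W S0" unfolding tight_def
  proof (intro conjI ballI impI)
    show "S0 \<in> G" using S0 by blast
    fix S' assume "S' \<in> G" "S' \<subseteq> W \<union> S0"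
    then have "?P S'" using S0(1) by blast
    then show "card (S0 - W) \<le> card (S' - W)" using S0(2) by blast
  qed
  then have "S0 - W \<in> UU G W" unfolding UU_def by blast
  moreover have "S0 - W \<subseteq> S" using S0(1) by blast
  ultimately show ?thesis by blast
qed

lemma U_up:
  assumes "Y \<in> upset X (UU G W)" "W \<subseteq> X"
  shows "W \<union> Y \<in> upset X G"
proof -
  obtain T where T: "T \<in> UU G W" "T \<subseteq> Y" "Y \<subseteq> X" using assms(1) unfolding upset_def by blast
  then obtain S where S: "tight G W S" "T = S - W" unfolding UU_def by blast
  then have "S \<in> G" unfolding tight_def by blast
  moreover have "S \<subseteq> W \<union> Y" using S T by blast
  ultimately show ?thesis using T assms(2) unfolding upset_def by blast
qed

lemma U_large: "large X a c G \<Longrightarrow> large X a c (UU G W)"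
  by (erule large_mono, rule upset_mono, rule U_cover)

lemma U_disj: "T \<in> UU G W \<Longrightarrow> T \<inter> W = {}"
  unfolding UU_def by blast

lemma U_recover:
  assumes "finite X" "G \<subseteq> Pow X" "T \<in> UU G W" "S' \<in> G" "S' \<subseteq> W \<union> T"
  shows "S' - W = T"
proof -
  obtain S where S: "tight G W S" "T = S - W" using assms(3) unfolding UU_def by blast
  have "S' \<subseteq> W \<union> S" using assms(5) S by blast
  then have le: "card T \<le> card (S' - W)" using S assms(4) unfolding tight_def by blast
  have sub: "S' - W \<subseteq> T" using assms(5) by blast
  have "S \<in> G" using S unfolding tight_def by blast
  then have "finite T" using S assms(1,2) finite_subset by blast
  then show ?thesis using card_seteq[OF _ sub le] by blast
qed

definition chi :: "'a set set \<Rightarrow> 'a set \<Rightarrow> 'a set" where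
  "chi G Z = (SOME S. S \<in> G \<and> S \<subseteq> Z)"

lemma mu_shift:
  assumes "finite X" "W \<subseteq> X" "T \<subseteq> X" "W \<inter> T = {}" "card T = k" "0 < w"
  shows "mu X w W = mu X w (W \<union> T) * ((1-w)/w)^k"
proof -
  have fW: "finite W" "finite T" using assms finite_subset by blast+
  have cU: "card (W \<union> T) = card W + k" using assms fW card_Un_disjoint by metis
  have "card (W \<union> T) \<le> card X" using assms by (intro card_mono) auto
  then have n: "card X - card W = (card X - card (W \<union> T)) + k" using cU by simp
  have "mu X w W = w ^ card W * (1-w) ^ (card X - card (W \<union> T)) * (1-w)^k"
    unfolding mu_def n by (simp add: power_add)
  also have "\<dots> = w ^ card W * w ^ k * (1-w) ^ (card X - card (W \<union> T)) * ((1-w)/w)^k"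
    using assms(6) by (simp add: power_divide field_simps)
  also have "\<dots> = mu X w (W \<union> T) * ((1-w)/w)^k"
    unfolding mu_def cU by (simp add: power_add)
  finally show ?thesis .
qed



lemma count_k:
  assumes fX: "finite X" and GX: "G \<subseteq> Pow X" and cl: "\<forall>S\<in>G. card S \<le> l"
    and w: "0 < w" "w \<le> 1" and a: "0 \<le> a"
  shows "(\<Sum>W\<in>Pow X. mu X w W * (\<Sum>T\<in>{T\<in>UU G W. card T = k}. a ^ k)) \<le> real (l choose k) * (a/w)^k"
proof -
  define c0 where "c0 = ((1-w)/w)^k * a^k"
  have c0: "0 \<le> c0" unfolding c0_def using w a by (intro mult_nonneg_nonneg zero_le_power) auto
  define Sig where "Sig = (SIGMA W:Pow X. {T\<in>UU G W. card T = k})"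
  define Tgt where "Tgt = (SIGMA Z:{Z\<in>Pow X. \<exists>S\<in>G. S \<subseteq> Z}. {T. T \<subseteq> chi G Z \<and> card T = k})"
  define \<phi> where "\<phi> = (\<lambda>(W::'a set, T::'a set). (W \<union> T, T))"
  define h where "h = (\<lambda>(Z::'a set, T::'a set). mu X w Z * c0)"
  have finSig: "finite Sig" unfolding Sig_def
  proof (intro finite_SigmaI)
    show "finite (Pow X)" using fX by simp
    fix W show "finite {T \<in> UU G W. card T = k}" using U_finite[OF fX GX, of W] by simp
  qed
  have chi: "chi G Z \<in> G \<and> chi G Z \<subseteq> Z" if "\<exists>S\<in>G. S \<subseteq> Z" for Z
  proof -
    from that obtain S where "S \<in> G \<and> S \<subseteq> Z" by blast
    then show ?thesis unfolding chi_def by (rule someI)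
  qed
  have finchi: "finite (chi G Z)" if "\<exists>S\<in>G. S \<subseteq> Z" for Z
  proof -
    have "chi G Z \<subseteq> X" using chi[OF that] GX by blast
    then show ?thesis using fX by (rule finite_subset)
  qed
  have finTgt: "finite Tgt" unfolding Tgt_def
  proof (intro finite_SigmaI)
    show "finite {Z \<in> Pow X. \<exists>S\<in>G. S \<subseteq> Z}" using fX by simp
    fix Z assume "Z \<in> {Z \<in> Pow X. \<exists>S\<in>G. S \<subseteq> Z}"
    then have "finite (chi G Z)" using finchi by blast
    then show "finite {T. T \<subseteq> chi G Z \<and> card T = k}" by (rule rev_finite_subset[OF finite_Pow_iff[THEN iffD2]]) blast
  qed
  have "(\<Sum>W\<in>Pow X. mu X w W * (\<Sum>T\<in>{T\<in>UU G W. card T = k}. a ^ k))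
      = (\<Sum>W\<in>Pow X. \<Sum>T\<in>{T\<in>UU G W. card T = k}. mu X w W * a ^ k)"
    by (simp only: sum_distrib_left)
  also have "\<dots> = (\<Sum>(W,T)\<in>Sig. mu X w W * a ^ k)"
    unfolding Sig_def using fX U_finite[OF fX GX] by (intro sum.Sigma) auto
  also have "\<dots> = (\<Sum>x\<in>Sig. h (\<phi> x))"
  proof (intro sum.cong refl)
    fix x assume "x \<in> Sig"
    then obtain W T where x: "x = (W,T)" "W \<subseteq> X" "T \<in> UU G W" "card T = k" unfolding Sig_def by auto
    have "T \<subseteq> X" using U_sub[OF GX] x by blast
    then have "mu X w W = mu X w (W \<union> T) * ((1-w)/w)^k"
      using mu_shift[OF fX x(2) _ _ x(4) w(1)] U_disj[OF x(3)] by blast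
    then show "(case x of (W, T) \<Rightarrow> mu X w W * a ^ k) = h (\<phi> x)"
      unfolding x h_def \<phi>_def c0_def by simp
  qed
  also have "\<dots> = (\<Sum>y\<in>\<phi> ` Sig. h y)"
  proof -
    have "inj_on \<phi> Sig"
    proof (rule inj_onI)
      fix x y assume "x \<in> Sig" "y \<in> Sig" "\<phi> x = \<phi> y"
      then obtain W T W' T' where xy: "x = (W,T)" "y = (W',T')" "T \<in> UU G W" "T' \<in> UU G W'"
        "W \<union> T = W' \<union> T'" "T = T'" unfolding Sig_def \<phi>_def by auto
      have "W = (W \<union> T) - T" using U_disj[OF xy(3)] by blast
      also have "\<dots> = W'" using U_disj[OF xy(4)] xy(5,6) by blast
      finally show "x = y" using xy by simp
    qed
    then show ?thesis by (simp add: sum.reindex)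
  qed
  also have "\<dots> \<le> (\<Sum>y\<in>Tgt. h y)"
  proof (rule sum_mono2[OF finTgt])
    show "\<phi> ` Sig \<subseteq> Tgt"
    proof
      fix y assume "y \<in> \<phi> ` Sig"
      then obtain W T where WT: "y = (W \<union> T, T)" "W \<subseteq> X" "T \<in> UU G W" "card T = k"
        unfolding Sig_def \<phi>_def by auto
      obtain S where S: "tight G W S" "T = S - W" using WT(3) unfolding UU_def by blast
      have SG: "S \<in> G" using S unfolding tight_def by blast
      have ex: "\<exists>S\<in>G. S \<subseteq> W \<union> T" using SG S by blast
      have "chi G (W \<union> T) - W = T" using chi[OF ex] U_recover[OF fX GX WT(3)] by blast
      then have "T \<subseteq> chi G (W \<union> T)" by blast
      moreover have "W \<union> T \<in> Pow X" using WT U_sub[OF GX] by blast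
      ultimately show "y \<in> Tgt" unfolding Tgt_def using WT ex by blast
    qed
    show "0 \<le> h b" for b unfolding h_def using w c0 by (cases b) (auto intro!: mult_nonneg_nonneg mu_nonneg)
  qed
  also have "\<dots> = (\<Sum>Z\<in>{Z\<in>Pow X. \<exists>S\<in>G. S \<subseteq> Z}. \<Sum>T\<in>{T. T \<subseteq> chi G Z \<and> card T = k}. mu X w Z * c0)"
  proof -
    have "(\<Sum>y\<in>Tgt. h y) = (\<Sum>(Z,T)\<in>Tgt. mu X w Z * c0)" unfolding h_def by simp
    also have "\<dots> = (\<Sum>Z\<in>{Z\<in>Pow X. \<exists>S\<in>G. S \<subseteq> Z}. \<Sum>T\<in>{T. T \<subseteq> chi G Z \<and> card T = k}. mu X w Z * c0)"
      unfolding Tgt_def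
    proof (rule sum.Sigma[symmetric])
      show "finite {Z \<in> Pow X. \<exists>S\<in>G. S \<subseteq> Z}" using fX by simp
      show "\<forall>Z\<in>{Z \<in> Pow X. \<exists>S\<in>G. S \<subseteq> Z}. finite {T. T \<subseteq> chi G Z \<and> card T = k}"
      proof
        fix Z assume "Z \<in> {Z \<in> Pow X. \<exists>S\<in>G. S \<subseteq> Z}"
        then have "finite (chi G Z)" using finchi by blast
        then show "finite {T. T \<subseteq> chi G Z \<and> card T = k}" by (rule rev_finite_subset[OF finite_Pow_iff[THEN iffD2]]) blast
      qed
    qed
    finally show ?thesis .
  qed
  also have "\<dots> = (\<Sum>Z\<in>{Z\<in>Pow X. \<exists>S\<in>G. S \<subseteq> Z}. real (card (chi G Z) choose k) * (mu X w Z * c0))"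
  proof (intro sum.cong refl)
    fix Z assume "Z \<in> {Z\<in>Pow X. \<exists>S\<in>G. S \<subseteq> Z}"
    then have "finite (chi G Z)" using finchi by blast
    then show "(\<Sum>T\<in>{T. T \<subseteq> chi G Z \<and> card T = k}. mu X w Z * c0) = real (card (chi G Z) choose k) * (mu X w Z * c0)"
      by (simp add: n_subsets)
  qed
  also have "\<dots> \<le> (\<Sum>Z\<in>{Z\<in>Pow X. \<exists>S\<in>G. S \<subseteq> Z}. real (l choose k) * (mu X w Z * c0))"
  proof (rule sum_mono)
    fix Z assume "Z \<in> {Z\<in>Pow X. \<exists>S\<in>G. S \<subseteq> Z}"
    then have "chi G Z \<in> G" using chi by blast
    then have "card (chi G Z) \<le> l" using cl by blast
    then have "card (chi G Z) choose k \<le> l choose k" by (rule binomial_right_mono)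
    then show "real (card (chi G Z) choose k) * (mu X w Z * c0) \<le> real (l choose k) * (mu X w Z * c0)"
      using w c0 by (intro mult_right_mono) (auto intro!: mult_nonneg_nonneg mu_nonneg)
  qed
  also have "\<dots> \<le> (\<Sum>Z\<in>Pow X. real (l choose k) * (mu X w Z * c0))"
  proof (rule sum_mono2)
    show "finite (Pow X)" using fX by simp
    show "{Z\<in>Pow X. \<exists>S\<in>G. S \<subseteq> Z} \<subseteq> Pow X" by blast
    show "0 \<le> real (l choose k) * (mu X w Z * c0)" for Z using w c0 by (auto intro!: mult_nonneg_nonneg mu_nonneg)
  qed
  also have "\<dots> = real (l choose k) * c0"
    using sum_mu_one[OF fX, of w] by (simp add: sum_distrib_left[symmetric] sum_distrib_right[symmetric])
  also have "\<dots> \<le> real (l choose k) * (a/w)^k"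
  proof (rule mult_left_mono)
    have "c0 = ((1-w) * a / w)^k" unfolding c0_def by (simp add: power_mult_distrib power_divide)
    also have "\<dots> \<le> (a/w)^k"
      using w a by (intro power_mono) (auto simp: divide_right_mono mult_left_le_one_le divide_nonneg_nonneg)
    finally show "c0 \<le> (a/w)^k" .
  qed simp
  finally show ?thesis .
qed



definition Zw :: "'a set set \<Rightarrow> 'a set \<Rightarrow> nat \<Rightarrow> real \<Rightarrow> real" where
  "Zw G W h a = (\<Sum>T\<in>{T\<in>UU G W. h < card T}. a ^ card T)"

lemma Zw_nonneg: "0 \<le> a \<Longrightarrow> 0 \<le> Zw G W h a"
  unfolding Zw_def by (intro sum_nonneg) simp

lemma Zw_split:
  assumes fX: "finite X" and GX: "G \<subseteq> Pow X" and cl: "\<forall>S\<in>G. card S \<le> l"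
  shows "Zw G W h a = (\<Sum>k\<in>{h<..l}. \<Sum>T\<in>{T\<in>UU G W. card T = k}. a ^ k)"
proof -
  let ?S = "{T\<in>UU G W. h < card T}"
  have fin: "finite ?S" using U_finite[OF fX GX, of W] by simp
  have img: "card ` ?S \<subseteq> {h<..l}" using U_card[OF fX GX cl] by auto
  have "Zw G W h a = (\<Sum>k\<in>{h<..l}. \<Sum>T\<in>{x. x \<in> ?S \<and> card x = k}. a ^ card T)"
    unfolding Zw_def using sum.group[OF fin finite_greaterThanAtMost img, of "\<lambda>T. a ^ card T"] by simp
  also have "\<dots> = (\<Sum>k\<in>{h<..l}. \<Sum>T\<in>{T\<in>UU G W. card T = k}. a ^ k)"
  proof (rule sum.cong[OF refl])
    fix k assume "k \<in> {h<..l}"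
    then have "{x. x \<in> ?S \<and> card x = k} = {T\<in>UU G W. card T = k}" by auto
    then show "(\<Sum>T\<in>{x. x \<in> ?S \<and> card x = k}. a ^ card T) = (\<Sum>T\<in>{T\<in>UU G W. card T = k}. a ^ k)"
      by simp
  qed
  finally show ?thesis .
qed

lemma EZ:
  assumes fX: "finite X" and GX: "G \<subseteq> Pow X" and cl: "\<forall>S\<in>G. card S \<le> l"
    and w: "0 < w" "w \<le> 1" and a: "0 \<le> a" "a \<le> w"
  shows "(\<Sum>W\<in>Pow X. mu X w W * Zw G W h a) \<le> (a/w)^(Suc h) * 2^l"
proof -
  have "(\<Sum>W\<in>Pow X. mu X w W * Zw G W h a)
     = (\<Sum>W\<in>Pow X. \<Sum>k\<in>{h<..l}. mu X w W * (\<Sum>T\<in>{T\<in>UU G W. card T = k}. a ^ k))"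
    unfolding Zw_split[OF fX GX cl] by (simp only: sum_distrib_left)
  also have "\<dots> = (\<Sum>k\<in>{h<..l}. \<Sum>W\<in>Pow X. mu X w W * (\<Sum>T\<in>{T\<in>UU G W. card T = k}. a ^ k))"
    by (rule sum.swap)
  also have "\<dots> \<le> (\<Sum>k\<in>{h<..l}. real (l choose k) * (a/w)^k)"
    by (intro sum_mono count_k[OF fX GX cl w a(1)])
  also have "\<dots> \<le> (\<Sum>k\<in>{h<..l}. real (l choose k) * (a/w)^(Suc h))"
  proof (intro sum_mono mult_left_mono)
    fix k assume "k \<in> {h<..l}"
    then show "(a/w)^k \<le> (a/w)^(Suc h)" using w a
      by (intro power_decreasing) auto
  qed simp
  also have "\<dots> = (a/w)^(Suc h) * (\<Sum>k\<in>{h<..l}. real (l choose k))"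
    by (simp only: sum_distrib_left mult.commute)
  also have "\<dots> \<le> (a/w)^(Suc h) * 2^l"
  proof (rule mult_left_mono)
    have "(\<Sum>k\<in>{h<..l}. real (l choose k)) \<le> (\<Sum>k\<in>{..l}. real (l choose k))"
      by (intro sum_mono2) auto
    also have "\<dots> = 2^l" using choose_row_sum[of l] by (metis of_nat_numeral of_nat_power of_nat_sum)
    finally show "(\<Sum>k\<in>{h<..l}. real (l choose k)) \<le> 2^l" .
  qed (use w a in simp)
  finally show ?thesis .
qed

lemma markov:
  assumes fX: "finite X" and w: "0 \<le> w" "w \<le> 1" and d: "0 < d" and f: "\<And>W. 0 \<le> f W"
  shows "(\<Sum>W\<in>Pow X. mu X w W * (if d < f W then 1 else 0)) \<le> (\<Sum>W\<in>Pow X. mu X w W * f W) / d"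
proof -
  have "(\<Sum>W\<in>Pow X. mu X w W * (if d < f W then 1 else 0)) \<le> (\<Sum>W\<in>Pow X. mu X w W * (f W / d))"
  proof (intro sum_mono mult_left_mono)
    fix W show "(if d < f W then 1 else 0) \<le> f W / d" using d f[of W] by auto
  qed (use w mu_nonneg in auto)
  also have "\<dots> = (\<Sum>W\<in>Pow X. mu X w W * f W) / d" by (simp add: sum_divide_distrib)
  finally show ?thesis .
qed

lemma large_small:
  assumes fX: "finite X" and UX: "U \<subseteq> Pow X" and lg: "large X a c U" and a: "0 \<le> a"
    and Z: "c' + (\<Sum>T\<in>{T\<in>U. h < card T}. a ^ card T) \<le> c"
  shows "large X a c' {T\<in>U. card T \<le> h}"
  unfolding large_def
proof (intro allI impI)
  fix C assume CX: "C \<subseteq> Pow X" and cov: "covers X C (upset X {T\<in>U. card T \<le> h})"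
  let ?B = "{T\<in>U. h < card T}"
  have finU: "finite U" using UX fX by (meson finite_Pow_iff finite_subset)
  have finC: "finite C" using CX fX by (meson finite_Pow_iff finite_subset)
  have finB: "finite ?B" using finU by simp
  have "covers X (C \<union> ?B) (upset X U)" unfolding covers_def
  proof
    fix Y assume "Y \<in> upset X U"
    then obtain T where T: "T \<in> U" "T \<subseteq> Y" "Y \<subseteq> X" unfolding upset_def by blast
    show "Y \<in> (\<Union>S\<in>C \<union> ?B. upset X {S})"
    proof (cases "card T \<le> h")
      case True
      then have "Y \<in> upset X {T\<in>U. card T \<le> h}" using T unfolding upset_def by blast
      then show ?thesis using cov unfolding covers_def by blast
    next
      case False
      then have "T \<in> ?B" using T by simp
      moreover have "Y \<in> upset X {T}" using T unfolding upset_def by blast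
      ultimately show ?thesis by blast
    qed
  qed
  moreover have "C \<union> ?B \<subseteq> Pow X" using CX UX by blast
  ultimately have "c < (\<Sum>S\<in>C \<union> ?B. a ^ card S)" using lg unfolding large_def by blast
  also have "\<dots> \<le> (\<Sum>S\<in>C. a ^ card S) + (\<Sum>S\<in>?B. a ^ card S)"
  proof -
    have "(\<Sum>S\<in>C \<union> ?B. a ^ card S) + (\<Sum>S\<in>C \<inter> ?B. a ^ card S) = (\<Sum>S\<in>C. a ^ card S) + (\<Sum>S\<in>?B. a ^ card S)"
      by (rule sum.union_inter[OF finC finB])
    moreover have "0 \<le> (\<Sum>S\<in>C \<inter> ?B. a ^ card S)" using a by (intro sum_nonneg) simp
    ultimately show ?thesis by linarith
  qed
  finally show "c' < (\<Sum>S\<in>C. a ^ card S)" using Z by linarith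
qed



definition cc :: "nat \<Rightarrow> real" where
  "cc l = 1/2 - (23/48) * (1/4)^(l div 2)"

lemma cc01: "cc 0 = 1/48" "cc 1 = 1/48" unfolding cc_def by simp_all

lemma cc_lt: "cc l < 1/2" unfolding cc_def by simp

lemma N1: assumes "0 < B" shows "exp (- B * cc 1) \<le> 2 powr (- B / 48)"
proof -
  have "2 powr (- B / 48) = exp (- B / 48 * ln 2)" by (simp add: powr_def)
  moreover have "- B / 48 \<le> - B / 48 * ln 2"
    using assms ln_2_less_1 by (simp add: mult_le_cancel_left1)
  ultimately show ?thesis unfolding cc01 by simp
qed

lemma N2: fixes B :: real assumes "B \<le> 32" shows "3/5 \<le> 2 powr (- B / 48)"
proof -
  have m: "2 powr (- 2/3) \<le> 2 powr (- B / 48)" using assms by (intro powr_mono) auto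
  have "(2 powr (- 2/3 :: real)) ^ 3 = 2 powr (- 2/3 * 3)"
    by (simp add: powr_realpow[symmetric] powr_powr)
  also have "\<dots> = 1/4" by (simp add: powr_minus powr_numeral)
  finally have c: "(2 powr (- 2/3 :: real)) ^ 3 = 1/4" .
  have "3/5 \<le> 2 powr (- 2/3 :: real)"
  proof (rule ccontr)
    assume "\<not> ?thesis"
    then have "2 powr (- 2/3 :: real) < 3/5" by simp
    then have "(2 powr (- 2/3 :: real)) ^ 3 < (3/5)^3" by (intro power_strict_mono) auto
    moreover have "(3/5::real)^3 = 27/125" by (simp add: power3_eq_cube)
    ultimately show False using c by simp
  qed
  then show ?thesis using m by (rule order_trans)
qed

lemma N3:
  assumes l: "2 \<le> l" and t: "0 \<le> t" "t \<le> 1/16"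
  shows "real (l div 2) + real l * (t ^ Suc (l div 2) * 2 ^ l / (cc l - cc (l div 2))) \<le> real l * (3/5)"
proof -
  define h where "h = l div 2"
  have h1: "1 \<le> h" using l h_def by simp
  have lh: "l \<le> 2*h + 1" using h_def by simp
  define u where "u = (1/4::real)^h"
  have u: "0 < u" unfolding u_def by simp
  have "t ^ Suc h \<le> (1/16) ^ Suc h" using t by (intro power_mono) auto
  also have "\<dots> = (1/16) * u^2"
  proof -
    have "u^2 = (1/4::real)^(2*h)" unfolding u_def by (simp add: power_mult[symmetric] mult.commute)
    also have "\<dots> = ((1/4::real)^2)^h" by (simp add: power_mult)
    also have "(1/4::real)^2 = 1/16" by (simp add: power2_eq_square)
    finally have "u^2 = (1/16::real)^h" .
    then show ?thesis by simp
  qed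
  finally have tt: "t ^ Suc h \<le> (1/16) * u^2" .
  have "(2::real) ^ l \<le> 2 ^ (2*h+1)" using lh by (intro power_increasing) auto
  also have "\<dots> = 2 / u"
  proof -
    have "(2::real)^(2*h+1) = 2 * (2^2)^h" by (simp add: power_mult)
    also have "\<dots> = 2 * 4^h" by simp
    also have "\<dots> = 2 / u" unfolding u_def by (simp add: power_one_over)
    finally show ?thesis .
  qed
  finally have tl: "(2::real) ^ l \<le> 2 / u" .
  have num: "t ^ Suc h * 2 ^ l \<le> u / 8"
  proof -
    have "t ^ Suc h * 2 ^ l \<le> (1/16) * u^2 * (2 / u)"
      using tt tl t by (intro mult_mono) auto
    also have "\<dots> = u / 8" using u by (simp add: power2_eq_square field_simps)
    finally show ?thesis .
  qed
  have "h div 2 \<le> h - 1" using h1 by simp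
  then have pd: "(1/4::real)^(h - 1) \<le> (1/4)^(h div 2)" by (intro power_decreasing) auto
  have e4:  "(1/4::real)^(h - 1) = 4 * u"
  proof -
    have hs: "h = Suc (h - 1)" using h1 by simp
    have "u = (1/4::real)^(Suc (h - 1))" unfolding u_def by (rule arg_cong[where f="\<lambda>n. (1/4::real)^n", OF hs])
    then have "u = (1/4) * (1/4::real)^(h - 1)" by (simp only: power_Suc)
    then show ?thesis by simp
  qed
  have q: "4 * u \<le> (1/4::real)^(h div 2)" using pd unfolding e4 .
  have c1: "cc l = 1/2 - (23/48) * u" unfolding cc_def u_def h_def by (rule refl)
  have c2: "cc h = 1/2 - (23/48) * (1/4)^(h div 2)" unfolding cc_def by (rule refl)
  have del: "cc l - cc h = (23/48) * ((1/4)^(h div 2) - u)" unfolding c1 c2 by (simp add: right_diff_distrib)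
  have dl: "(69/48) * u \<le> cc l - cc h" unfolding del using q by simp
  have dpos: "0 < cc l - cc h" using dl u by linarith
  have rho: "t ^ Suc h * 2 ^ l / (cc l - cc h) \<le> 1/10"
  proof -
    have "t ^ Suc h * 2 ^ l / (cc l - cc h) \<le> (u/8) / ((69/48) * u)"
      by (rule frac_le[OF _ num _ dl]) (use u in auto)
    also have "\<dots> = 2/23" using u by simp
    finally show ?thesis by simp
  qed
  have "real h * 2 \<le> real l" unfolding h_def by linarith
  then have "real h + real l * (t ^ Suc h * 2 ^ l / (cc l - cc h)) \<le> real l / 2 + real l * (1/10)"
    using rho by (intro add_mono mult_left_mono) auto
  also have "\<dots> = real l * (3/5)" by simp
  finally show ?thesis unfolding h_def .
qed



definition ind :: "'a set \<Rightarrow> 'a set set \<Rightarrow> 'a set \<Rightarrow> real" where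
  "ind X G Z = (if Z \<in> upset X G then 0 else 1)"

lemma fail_ind:
  assumes "finite X" shows "fail X p G = (\<Sum>Z\<in>Pow X. mu X p Z * ind X G Z)"
proof -
  have "(\<Sum>Z\<in>Pow X. mu X p Z * ind X G Z) = (\<Sum>Z\<in>Pow X. if Z \<notin> upset X G then mu X p Z else 0)"
    by (intro sum.cong) (auto simp: ind_def)
  also have "\<dots> = fail X p G" unfolding fail_def using assms by (intro sum.inter_filter[symmetric]) simp
  finally show ?thesis by simp
qed

lemma upset_upward: "Z \<in> upset X G \<Longrightarrow> Z \<subseteq> Y \<Longrightarrow> Y \<subseteq> X \<Longrightarrow> Y \<in> upset X G"
  unfolding upset_def by blast

lemma inner_le:
  assumes fX: "finite X" and b: "0 \<le> b" "b \<le> 1"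
    and up: "\<And>Y. Y \<subseteq> X \<Longrightarrow> Y \<in> upset X G' \<Longrightarrow> W \<union> Y \<in> upset X G"
  shows "(\<Sum>Y\<in>Pow X. mu X b Y * ind X G (W \<union> Y)) \<le> fail X b G'"
  unfolding fail_ind[OF fX]
proof (rule sum_mono)
  fix Y assume "Y \<in> Pow X"
  then have "ind X G (W \<union> Y) \<le> ind X G' Y" using up unfolding ind_def by auto
  then show "mu X b Y * ind X G (W \<union> Y) \<le> mu X b Y * ind X G' Y"
    using b by (intro mult_left_mono mu_nonneg) auto
qed

lemma zero_level:
  assumes "finite X" "G \<subseteq> Pow X" "\<forall>S\<in>G. card S \<le> 0" "large X a (cc 0) G"
  shows "fail X p G = 0"
proof -
  have "G \<noteq> {}" using large_nonempty[OF assms(4)] cc01 by simp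
  then have "{} \<in> G" using level0[OF assms(2,1,3)] by blast
  then show ?thesis by (rule fail_empty_in)
qed

lemma ind_nonneg: "0 \<le> ind X G Z" unfolding ind_def by simp

lemma cc_dpos:
  assumes "2 \<le> l" shows "0 < cc l - cc (l div 2)"
proof -
  define h where "h = l div 2"
  have "h div 2 < h" using assms h_def by simp
  then have "(1/4::real)^h < (1/4)^(h div 2)" by (intro power_strict_decreasing) auto
  moreover have "cc l = 1/2 - (23/48) * (1/4::real)^h" unfolding cc_def h_def by (rule refl)
  moreover have "cc h = 1/2 - (23/48) * (1/4::real)^(h div 2)" unfolding cc_def by (rule refl)
  ultimately show ?thesis unfolding h_def[symmetric] by simp
qed

lemma main_rec:
  fixes X :: "'a set"
  assumes fX: "finite X" and w: "0 < w" "w \<le> 1" and a: "0 < a" and B: "0 < B" "a * B \<le> w"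
  shows "G \<subseteq> Pow X \<Longrightarrow> \<forall>S\<in>G. card S \<le> l \<Longrightarrow> large X a (cc l) G \<Longrightarrow> (2 \<le> l \<Longrightarrow> 16 \<le> B \<and> B \<le> 32)
     \<Longrightarrow> fail X (1 - (1-w)^N) G \<le> real l * (2 powr (- B / 48))^N"
proof (induction N arbitrary: l G)
  case 0
  show ?case
  proof (cases "l = 0")
    case True
    then show ?thesis using zero_level[OF fX "0.prems"(1)] "0.prems" by simp
  next
    case False
    then have "fail X (1 - (1-w)^0) G \<le> 1" using fail_le1[OF fX] by simp
    then show ?thesis using False by simp
  qed
next
  case (Suc N)
  define \<theta> where "\<theta> = 2 powr (- B / 48)"
  have th: "0 < \<theta>" unfolding \<theta>_def by simp
  define pN where "pN = 1 - (1-w)^N"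
  have pN: "0 \<le> pN" "pN \<le> 1" unfolding pN_def using w by (auto simp: power_le_one)
  have pS: "1 - (1-w)^(Suc N) = 1 - (1-w)*(1-pN)" unfolding pN_def by simp
  have GX: "G \<subseteq> Pow X" and cl: "\<forall>S\<in>G. card S \<le> l" and lg: "large X a (cc l) G"
    using Suc.prems by auto
  have IH: "\<And>l G. G \<subseteq> Pow X \<Longrightarrow> \<forall>S\<in>G. card S \<le> l \<Longrightarrow> large X a (cc l) G \<Longrightarrow> (2 \<le> l \<Longrightarrow> 16 \<le> B \<and> B \<le> 32)
     \<Longrightarrow> fail X pN G \<le> real l * \<theta>^N"
    using Suc.IH unfolding pN_def \<theta>_def by blast
  define inner where "inner = (\<lambda>W. \<Sum>Y\<in>Pow X. mu X pN Y * ind X G (W \<union> Y))"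
  have decomp: "fail X (1 - (1-w)^(Suc N)) G = (\<Sum>W\<in>Pow X. mu X w W * inner W)"
    unfolding pS fail_ind[OF fX] inner_def using coupling[OF fX, of w pN "ind X G"] by simp
  consider "l = 0" | "l = 1" | "2 \<le> l" by linarith
  then show ?case
  proof cases
    case 1
    then show ?thesis using zero_level[OF fX GX] cl lg by simp
  next
    case 2
    have inW: "inner W \<le> \<theta>^N * ind X G W" if "W \<in> Pow X" for W
    proof (cases "W \<in> upset X G")
      case True
      have "inner W = 0" unfolding inner_def
      proof (intro sum.neutral ballI)
        fix Y assume "Y \<in> Pow X"
        then have "W \<union> Y \<in> upset X G" using True that by (intro upset_upward[OF True]) auto
        then show "mu X pN Y * ind X G (W \<union> Y) = 0" unfolding ind_def by simp
      qed
      then show ?thesis using True unfolding ind_def by simp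
    next
      case False
      have "inner W \<le> fail X pN G" unfolding inner_def
        using that by (intro inner_le[OF fX pN]) (auto intro: upset_upward)
      also have "\<dots> \<le> real 1 * \<theta>^N" by (rule IH[OF GX]) (use cl lg 2 in auto)
      finally show ?thesis using False unfolding ind_def by simp
    qed
    have "fail X (1 - (1-w)^(Suc N)) G \<le> (\<Sum>W\<in>Pow X. mu X w W * (\<theta>^N * ind X G W))"
      unfolding decomp using inW w by (intro sum_mono mult_left_mono mu_nonneg) auto
    also have "\<dots> = \<theta>^N * fail X w G" unfolding fail_ind[OF fX]
      by (simp add: sum_distrib_left mult.commute mult.left_commute)
    also have "\<dots> \<le> \<theta>^N * exp (- B * cc 1)"
      using level1[OF fX GX _ _ a _ w _ B(2)] cl lg 2 B th cc01
      by (intro mult_left_mono) auto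
    also have "\<dots> \<le> \<theta>^N * \<theta>"
    proof (rule mult_left_mono)
      show "exp (- B * cc 1) \<le> \<theta>" unfolding \<theta>_def by (rule N1[OF B(1)])
      show "0 \<le> \<theta>^N" using th by simp
    qed
    also have "\<theta>^N * \<theta> = real l * (2 powr (- B / 48))^(Suc N)"
      using 2 unfolding \<theta>_def by (simp only: power_Suc2 of_nat_1 mult_1)
    finally show ?thesis .
  next
    case 3
    define h where "h = l div 2"
    define \<delta> where "\<delta> = cc l - cc h"
    have Brange: "16 \<le> B" "B \<le> 32" using Suc.prems 3 by auto
    have inW: "inner W \<le> real h * \<theta>^N + real l * \<theta>^N * (if \<delta> < Zw G W h a then 1 else 0)"
      if W: "W \<in> Pow X" for W
    proof -
      let ?U = "UU G W"
      have UX: "?U \<subseteq> Pow X" using U_sub[OF GX] .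
      have Ucl: "\<forall>T\<in>?U. card T \<le> l" using U_card[OF fX GX cl] by blast
      have Ulg: "large X a (cc l) ?U" using U_large[OF lg] .
      have Uup: "\<And>Y. Y \<subseteq> X \<Longrightarrow> Y \<in> upset X ?U \<Longrightarrow> W \<union> Y \<in> upset X G"
        using U_up W by blast
      have i1: "inner W \<le> real l * \<theta>^N"
      proof -
        have "inner W \<le> fail X pN ?U" unfolding inner_def using Uup by (intro inner_le[OF fX pN])
        also have "\<dots> \<le> real l * \<theta>^N" by (rule IH[OF UX Ucl Ulg]) (use Brange in simp)
        finally show ?thesis .
      qed
      show ?thesis
      proof (cases "\<delta> < Zw G W h a")
        case True
        have "0 \<le> real h * \<theta>^N" using th by simp
        then show ?thesis using i1 True by simp
      next
        case False
        let ?Us = "{T\<in>?U. card T \<le> h}"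
        have UsX: "?Us \<subseteq> Pow X" using UX by blast
        have Uscl: "\<forall>T\<in>?Us. card T \<le> h" by blast
        have Uslg: "large X a (cc h) ?Us"
        proof (rule large_small[OF fX UX Ulg])
          show "0 \<le> a" using a by simp
          show "cc h + (\<Sum>T\<in>{T\<in>?U. h < card T}. a ^ card T) \<le> cc l"
            using False unfolding \<delta>_def Zw_def by simp
        qed
        have Usup: "\<And>Y. Y \<subseteq> X \<Longrightarrow> Y \<in> upset X ?Us \<Longrightarrow> W \<union> Y \<in> upset X G"
        proof -
          fix Y assume "Y \<subseteq> X" "Y \<in> upset X ?Us"
          moreover have "upset X ?Us \<subseteq> upset X ?U" by (intro upset_mono) blast
          ultimately show "W \<union> Y \<in> upset X G" using Uup by blast
        qed
        have "inner W \<le> fail X pN ?Us" unfolding inner_def using Usup by (intro inner_le[OF fX pN])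
        also have "\<dots> \<le> real h * \<theta>^N" by (rule IH[OF UsX Uscl Uslg]) (use Brange in simp)
        finally show ?thesis using False th by simp
      qed
    qed
    have a0: "0 \<le> a" using a by (rule less_imp_le)
    have Zn: "0 \<le> Zw G W h a" for W by (rule Zw_nonneg[OF a0])
    have dpos: "0 < \<delta>" unfolding \<delta>_def h_def by (rule cc_dpos[OF 3])
    define J where "J = (\<lambda>W. if \<delta> < Zw G W h a then 1 else (0::real))"
    have S1: "fail X (1 - (1-w)^(Suc N)) G \<le> (\<Sum>W\<in>Pow X. mu X w W * (real h * \<theta>^N + real l * \<theta>^N * J W))"
      unfolding decomp
    proof (rule sum_mono)
      fix W assume W: "W \<in> Pow X"
      have "0 \<le> mu X w W" using w by (intro mu_nonneg) auto
      then show "mu X w W * inner W \<le> mu X w W * (real h * \<theta>^N + real l * \<theta>^N * J W)"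
        unfolding J_def by (rule mult_left_mono[OF inW[OF W]])
    qed
    have S2: "(\<Sum>W\<in>Pow X. mu X w W * (real h * \<theta>^N + real l * \<theta>^N * J W))
        = real h * \<theta>^N + real l * \<theta>^N * (\<Sum>W\<in>Pow X. mu X w W * J W)"
    proof -
      have "(\<Sum>W\<in>Pow X. mu X w W * (real h * \<theta>^N + real l * \<theta>^N * J W))
         = (\<Sum>W\<in>Pow X. real h * \<theta>^N * mu X w W) + (\<Sum>W\<in>Pow X. real l * \<theta>^N * (mu X w W * J W))"
        by (simp add: sum.distrib algebra_simps)
      also have "\<dots> = real h * \<theta>^N * (\<Sum>W\<in>Pow X. mu X w W) + real l * \<theta>^N * (\<Sum>W\<in>Pow X. mu X w W * J W)"
        by (simp only: sum_distrib_left)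
      finally show ?thesis using sum_mu_one[OF fX, of w] by simp
    qed
    have S3: "(\<Sum>W\<in>Pow X. mu X w W * J W) \<le> (\<Sum>W\<in>Pow X. mu X w W * Zw G W h a) / \<delta>"
      unfolding J_def using markov[OF fX _ w(2) dpos Zn] w by simp
    have aw: "a \<le> w / 16"
    proof -
      have "a * 16 \<le> a * B" using a Brange by (intro mult_left_mono) auto
      then show ?thesis using B(2) by simp
    qed
    have S4: "(\<Sum>W\<in>Pow X. mu X w W * Zw G W h a) \<le> (a/w)^(Suc h) * 2^l"
      by (rule EZ[OF fX GX cl w a0]) (use aw w in simp)
    have t: "0 \<le> a/w" "a/w \<le> 1/16" using a w aw by (auto simp: divide_le_eq)
    have n3: "real h + real l * ((a/w) ^ Suc h * 2 ^ l / \<delta>) \<le> real l * (3/5)"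
      using N3[OF 3 t] unfolding h_def \<delta>_def .
    have th35: "3/5 \<le> \<theta>" unfolding \<theta>_def using N2 Brange by simp
    have "fail X (1 - (1-w)^(Suc N)) G \<le> real h * \<theta>^N + real l * \<theta>^N * ((a/w)^(Suc h) * 2^l / \<delta>)"
    proof -
      have "(\<Sum>W\<in>Pow X. mu X w W * J W) \<le> (a/w)^(Suc h) * 2^l / \<delta>"
        using S3 S4 dpos by (meson divide_right_mono less_imp_le order_trans)
      then have "real l * \<theta>^N * (\<Sum>W\<in>Pow X. mu X w W * J W) \<le> real l * \<theta>^N * ((a/w)^(Suc h) * 2^l / \<delta>)"
        using th by (intro mult_left_mono) auto
      then show ?thesis using S1 S2 by linarith
    qed
    also have "\<dots> = \<theta>^N * (real h + real l * ((a/w) ^ Suc h * 2 ^ l / \<delta>))"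
      by (simp add: algebra_simps)
    also have "\<dots> \<le> \<theta>^N * (real l * (3/5))" using n3 th by (intro mult_left_mono) auto
    also have "\<dots> \<le> \<theta>^N * (real l * \<theta>)" using th35 th by (intro mult_left_mono) auto
    also have "\<dots> = real l * (2 powr (- B / 48))^(Suc N)" unfolding \<theta>_def by (simp add: power_Suc2)
    finally show ?thesis .
  qed
qed



lemma qlarge:
  assumes fX: "finite X" and Fne: "F \<noteq> {}" and q: "0 < qq X F"
    and CX: "C \<subseteq> Pow X" and cov: "covers X C F"
  shows "1/2 \<le> (\<Sum>S\<in>C. (qq X F) ^ card S)"
proof (rule ccontr)
  let ?q = "qq X F"
  let ?f = "\<lambda>r::real. \<Sum>S\<in>C. r ^ card S"
  let ?Sq = "{p. 0 \<le> p \<and> p \<le> 1 \<and> p_small X p F}"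
  assume "\<not> 1/2 \<le> ?f ?q"
  then have lt: "?f ?q < 1/2" by simp
  have finC: "finite C" using CX fX by (meson finite_Pow_iff finite_subset)
  have bdd: "bdd_above ?Sq" by (rule bdd_aboveI[of _ 1]) auto
  show False
  proof (cases "1 \<le> ?q")
    case True
    have "(\<Sum>S\<in>C. (1::real)) \<le> ?f ?q"
      by (intro sum_mono) (use True in \<open>simp add: one_le_power\<close>)
    then have "card C < 1/2" using lt by simp
    then have "card C = 0" by linarith
    then have "C = {}" using finC by simp
    then have "F = {}" using cov unfolding covers_def by simp
    then show False using Fne by simp
  next
    case False
    have "(?f \<longlongrightarrow> ?f ?q) (at_right ?q)" by (intro tendsto_intros)
    then have ev: "eventually (\<lambda>r. ?f r < 1/2) (at_right ?q)" using lt by (rule order_tendstoD)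
    then obtain b where b: "b > ?q" "\<And>y. y > ?q \<Longrightarrow> y < b \<Longrightarrow> ?f y < 1/2"
      unfolding eventually_at_right_field by blast
    define r where "r = (?q + min b 1) / 2"
    have r: "?q < r" "r < b" "r \<le> 1" using b False unfolding r_def by auto
    have "?f r < 1/2" using b r by blast
    then have "p_small X r F" unfolding p_small_def using CX cov by (intro exI[of _ C]) auto
    then have "r \<in> ?Sq" using r q by auto
    then have "r \<le> ?q" unfolding qq_def using bdd by (rule cSup_upper)
    then show False using r by simp
  qed
qed

lemma min_upset:
  assumes fX: "finite X" and FX: "F \<subseteq> Pow X"
    and up: "\<And>Y Z. Y \<in> F \<Longrightarrow> Y \<subseteq> Z \<Longrightarrow> Z \<subseteq> X \<Longrightarrow> Z \<in> F"
  shows "upset X (minimal_elems F) = F"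
proof
  show "upset X (minimal_elems F) \<subseteq> F"
  proof
    fix T assume "T \<in> upset X (minimal_elems F)"
    then obtain S where "S \<in> minimal_elems F" "S \<subseteq> T" "T \<subseteq> X" unfolding upset_def by blast
    then show "T \<in> F" using up unfolding minimal_elems_def by blast
  qed
  show "F \<subseteq> upset X (minimal_elems F)"
  proof
    fix T assume T: "T \<in> F"
    let ?P = "\<lambda>S. S \<in> F \<and> S \<subseteq> T"
    have "?P T" using T by blast
    then obtain S where S: "?P S" "\<forall>y. ?P y \<longrightarrow> card S \<le> card y"
      using ex_has_least_nat[of ?P T card] by blast
    have fS: "finite S" using S(1) FX fX by (meson PowD finite_subset subsetD)
    have "S \<in> minimal_elems F" unfolding minimal_elems_def
    proof (intro CollectI conjI ballI impI)
      show "S \<in> F" using S by blast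
      fix T' assume "T' \<in> F" "T' \<subseteq> S"
      then have "card S \<le> card T'" using S by blast
      then show "T' = S" using card_seteq[OF fS \<open>T' \<subseteq> S\<close>] by blast
    qed
    moreover have "T \<subseteq> X" using T FX by blast
    ultimately show "T \<in> upset X (minimal_elems F)" unfolding upset_def using S by blast
  qed
qed

lemma bern_root:
  assumes p: "0 < p" "p < 1" and N: "0 < N"
  shows "p / N \<le> 1 - root N (1 - p)" "0 < 1 - root N (1 - p)" "1 - root N (1 - p) \<le> 1"
    "1 - (1 - (1 - root N (1 - p)))^N = p"
proof -
  have b: "1 + real N * (- p / N) \<le> (1 + (- p / N))^N"
    by (rule Bernoulli_inequality) (use p N in \<open>simp add: field_simps\<close>)
  then have "1 - p \<le> (1 - p/N)^N" using N by simp
  moreover have "0 \<le> 1 - p/N" using p N by (simp add: field_simps)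
  ultimately have "root N (1 - p) \<le> root N ((1 - p/N)^N)" using N by (intro real_root_le_mono) auto
  also have "\<dots> = 1 - p/N" using N \<open>0 \<le> 1 - p/N\<close> by (rule real_root_power_cancel)
  finally show "p / N \<le> 1 - root N (1 - p)" by simp
  show "0 < 1 - root N (1 - p)" using p N by simp
  show "1 - root N (1 - p) \<le> 1" using p by (simp add: real_root_ge_zero)
  show "1 - (1 - (1 - root N (1 - p)))^N = p" using p N by simp
qed



lemma final_alg:
  fixes mA mB mF \<tau> \<epsilon> :: real
  assumes "0 < mA" "0 < mB" "0 < mF" "1 - \<tau> \<le> mF" "\<epsilon> < 1"
    "\<epsilon> > 1 - ((mA / mF) / mB) * (1 - \<tau>)"
  shows "mA / mB > 1 - \<epsilon>"
proof (cases "1 - \<tau> \<le> 0")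
  case True
  have "0 \<le> (mA / mF) / mB" using assms by simp
  then have "((mA / mF) / mB) * (1 - \<tau>) \<le> 0" using True by (rule mult_nonneg_nonpos)
  then show ?thesis using assms by linarith
next
  case False
  have "((mA / mF) / mB) * (1 - \<tau>) \<le> ((mA / mF) / mB) * mF"
    using assms by (intro mult_left_mono) auto
  also have "\<dots> = mA / mB" using assms by simp
  finally show ?thesis using assms by linarith
qed

lemma mu_pos: "0 < p \<Longrightarrow> p < 1 \<Longrightarrow> 0 < mu X p S"
  unfolding mu_def by simp

theorem lemma3p7:
  fixes X :: "'a set" and A B :: "'a set set" and p \<epsilon> K :: real
  assumes "finite X"
    and "A \<noteq> {}" and "A \<subseteq> B" and "B \<subseteq> Pow X"
    and "0 < p" and "p < 1"
    and "K = 48"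
    and "0 < \<epsilon>" and "\<epsilon> < 1"
    and "\<epsilon> > 1 - r_AB X A B p *
            (1 - real (ell0 (upset X A)) * 2 powr (- p / (K * qq X (upset X A))))"
  shows "mu_fam X p A / mu_fam X p B > 1 - \<epsilon>"
proof -
  note fX = assms(1)
  have AX: "A \<subseteq> Pow X" using assms(3,4) by blast
  define F where "F = upset X A"
  have FX: "F \<subseteq> Pow X" unfolding F_def upset_def by blast
  have up: "\<And>Y Z. Y \<in> F \<Longrightarrow> Y \<subseteq> Z \<Longrightarrow> Z \<subseteq> X \<Longrightarrow> Z \<in> F" unfolding F_def upset_def by blast
  have AF: "A \<subseteq> F" unfolding F_def upset_def using AX by blast
  have Fne: "F \<noteq> {}" using AF assms(2) by blast
  have finPX: "finite (Pow X)" using fX by simp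
  have finF: "finite F" using FX finPX by (rule finite_subset)
  have finA: "finite A" using AX finPX by (rule finite_subset)
  have finB: "finite B" using assms(4) finPX by (rule finite_subset)
  define G0 where "G0 = minimal_elems F"
  have G0F: "upset X G0 = F" unfolding G0_def by (rule min_upset[OF fX FX up])
  have G0sub: "G0 \<subseteq> F" unfolding G0_def minimal_elems_def by blast
  have G0X: "G0 \<subseteq> Pow X" using G0sub FX by blast
  have finG0: "finite G0" using G0sub finF by (rule finite_subset)
  have G0ne: "G0 \<noteq> {}"
  proof
    assume "G0 = {}"
    then have "upset X G0 = {}" unfolding upset_def by blast
    then show False using G0F Fne by simp
  qed
  define l0 where "l0 = ell0 F"
  have cl: "\<forall>S\<in>G0. card S \<le> l0"
    unfolding l0_def ell0_def G0_def[symmetric] using finG0 by (auto intro: Max_ge)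
  define q where "q = qq X F"
  define \<tau> where "\<tau> = real l0 * 2 powr (- p / (K * q))"
  have p01: "0 \<le> p" "p \<le> 1" using assms by auto
  have failG: "fail X p G0 = (\<Sum>Y\<in>Pow X - F. mu X p Y)"
  proof -
    have "{Y\<in>Pow X. Y \<notin> upset X G0} = Pow X - F" using G0F by blast
    then show ?thesis unfolding fail_def by simp
  qed
  have mF: "mu_fam X p F = 1 - fail X p G0"
  proof -
    have "(\<Sum>Y\<in>Pow X. mu X p Y) = (\<Sum>Y\<in>Pow X - F. mu X p Y) + (\<Sum>Y\<in>F. mu X p Y)"
      by (rule sum.subset_diff[OF FX finPX])
    then show ?thesis unfolding mu_fam_def failG using sum_mu_one[OF fX] by simp
  qed
  have key: "fail X p G0 \<le> \<tau>"
  proof -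
    consider "l0 = 0" | "1 \<le> \<tau>" | "1 \<le> l0" "\<tau> < 1" by linarith
    then show ?thesis
    proof cases
      case 1
      then have "{} \<in> G0" using level0[OF G0X fX _ G0ne] cl by simp
      then show ?thesis using fail_empty_in[of G0 X p] 1 unfolding \<tau>_def by simp
    next
      case 2
      then show ?thesis using fail_le1[OF fX p01, of G0] by linarith
    next
      case 3
      have qpos: "0 < q"
      proof (rule ccontr)
        assume "\<not> 0 < q"
        then have "K * q \<le> 0" using assms(7) by simp
        then have "p / (K * q) \<le> 0" using assms(5) by (intro divide_nonneg_nonpos) auto
        then have "0 \<le> - p / (K * q)" by simp
        then have "1 \<le> 2 powr (- p / (K * q))" by (intro ge_one_powr_ge_zero) auto
        then have "real l0 * 1 \<le> \<tau>" unfolding \<tau>_def using 3 by (intro mult_left_mono) auto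
        then show False using 3 by simp
      qed
      have lg: "large X q (cc l0) G0" unfolding large_def
      proof (intro allI impI)
        fix C assume "C \<subseteq> Pow X" "covers X C (upset X G0)"
        then have "1/2 \<le> (\<Sum>S\<in>C. q ^ card S)" unfolding G0F q_def
          using qlarge[OF fX Fne] qpos q_def by blast
        then show "cc l0 < (\<Sum>S\<in>C. q ^ card S)" using cc_lt[of l0] by linarith
      qed
      show ?thesis
      proof (cases "l0 = 1")
        case True
        have "fail X (1 - (1-p)^1) G0 \<le> real l0 * (2 powr (- (p/q) / 48))^1"
          by (rule main_rec[OF fX assms(5) p01(2) qpos _ _ G0X cl lg]) (use True assms(5) qpos in auto)
        moreover have "- (p/q) / 48 = - p / (K * q)" using assms(7) by simp
        ultimately show ?thesis unfolding \<tau>_def using True by (simp only: power_one_right) simp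
      next
        case False
        then have l2: "2 \<le> l0" using 3 by simp
        define x where "x = p / (K * q)"
        have x: "1 < x"
        proof -
          have "2 powr (- x) < 1 / 2"
          proof -
            have f1: "real l0 * 2 powr (- x) < 1" using 3 unfolding \<tau>_def x_def by simp
            have f2: "2 * 2 powr (- x) \<le> real l0 * 2 powr (- x)" using l2 by (intro mult_right_mono) auto
            from f1 f2 show ?thesis by linarith
          qed
          also have "(1/2::real) = 2 powr (- 1)" by (simp add: powr_minus)
          finally have "2 powr (- x) < 2 powr (- 1::real)" .
          then have "- x < - 1" using powr_less_cancel_iff[of 2 "- x" "- 1"] by simp
          then show ?thesis by simp
        qed
        define y where "y = p / (32 * q)"
        have yx: "y = (3/2) * x" unfolding y_def x_def using assms(7) by simp
        define N where "N = nat \<lceil>y\<rceil>"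
        have y0: "0 < y" using yx x by simp
        have rN: "real N = of_int \<lceil>y\<rceil>" unfolding N_def using y0 by simp
        have Ny: "y \<le> real N" "real N < y + 1" unfolding rN using ceiling_correct[of y] by linarith+
        have N2: "2 \<le> N" using Ny yx x by linarith
        then have Npos: "0 < N" by simp
        define B where "B = p / (real N * q)"
        have BN: "B = 32 * y / real N" unfolding B_def y_def using qpos N2 by (simp add: field_simps)
        have B32: "B \<le> 32" unfolding BN using Ny N2 yx x by (simp add: divide_le_eq)
        have B16: "16 \<le> B" unfolding BN using Ny N2 yx x by (simp add: le_divide_eq)
        define w where "w = 1 - root N (1 - p)"
        note br = bern_root[OF assms(5,6) Npos, folded w_def]
        have aB: "q * B \<le> w" using br(1) qpos unfolding B_def by (simp add: field_simps)
        have "fail X (1 - (1-w)^N) G0 \<le> real l0 * (2 powr (- B / 48))^N"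
          by (rule main_rec[OF fX br(2) br(3) qpos _ aB G0X cl lg]) (use B16 B32 in auto)
        moreover have "1 - (1-w)^N = p" using br(4) by simp
        moreover have "(2 powr (- B / 48))^N = 2 powr (- p / (K * q))"
        proof -
          have "(2 powr (- B / 48))^N = 2 powr (real N * (- B / 48))" by (rule powr_power) simp
          also have "real N * (- B / 48) = - p / (K * q)" unfolding B_def using assms(7) N2 qpos by (simp add: field_simps)
          finally show ?thesis .
        qed
        ultimately show ?thesis unfolding \<tau>_def by simp
      qed
    qed
  qed
  have mApos: "0 < mu_fam X p A" unfolding mu_fam_def
    using finA assms(2) mu_pos[OF assms(5,6)] by (intro sum_pos) auto
  have mAB: "mu_fam X p A \<le> mu_fam X p B" unfolding mu_fam_def
    using finB assms(3) mu_pos[OF assms(5,6)] by (intro sum_mono2) (auto intro: less_imp_le)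
  have mAF: "mu_fam X p A \<le> mu_fam X p F" unfolding mu_fam_def
    using finF AF mu_pos[OF assms(5,6)] by (intro sum_mono2) (auto intro: less_imp_le)
  show ?thesis
  proof (rule final_alg)
    show "0 < mu_fam X p A" by (rule mApos)
    show "0 < mu_fam X p B" using mApos mAB by linarith
    show "0 < mu_fam X p F" using mApos mAF by linarith
    show "1 - \<tau> \<le> mu_fam X p F" using mF key by linarith
    show "\<epsilon> < 1" by (rule assms(9))
    show "1 - mu_fam X p A / mu_fam X p F / mu_fam X p B * (1 - \<tau>) < \<epsilon>"
      using assms(10) unfolding r_AB_def \<tau>_def q_def l0_def F_def .
  qed
qed


end
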